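(* Let $n\ge2$ and let $Q=\begin{pmatrix} M & m\\ m^\top&\mu\end{pmatrix}\in\mathcal{S}^n$ with $M\in\mathcal{S}^{n-1}$, $m\in\mathbb{R}^{n-1}$, $\mu\in\mathbb{R}$, and define its lift $\widetilde Q=\begin{pmatrix} M&m&m\\ m^\top&\mu&\mu\\ m^\top&\mu&\mu\end{pmatrix}\in\mathcal{S}^{n+1}$. If $Q\in(\mathcal{S}^n_{\ge0}+\mathcal{N}^n)\setminus(\mathcal{S}^n_{\ge0}\cup\mathcal{N}^n)$, then $\widetilde Q\in(\mathcal{S}^{n+1}_{\ge0}+\mathcal{N}^{n+1})\setminus(\mathcal{S}^{n+1}_{\ge0}\cup\mathcal{N}^{n+1})$. If $Q\in\mathcal{COP}^n\setminus(\mathcal{S}^n_{\ge0}+\mathcal{N}^n)$, then $\widetilde Q\in\mathcal{COP}^{n+1}\setminus(\mathcal{S}^{n+1}_{\ge0}+\mathcal{N}^{n+1})$.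
   Context: $\mathcal{S}^n$: real symmetric $n\times n$ matrices; $\mathcal{S}^n_{\ge0}$: positive semidefinite ones; $\mathcal{N}^n$: symmetric $n\times n$ matrices with all entries nonnegative; $\mathcal{COP}^n=\{B\in\mathcal{S}^n: x^\top Bx\ge0\ \forall x\in\mathbb{R}^n_{\ge0}\}$. *)

theory Defs
  imports "HOL-Analysis.Analysis"
begin

text \<open>Matrices of size n are represented as functions nat => nat => real;
only the entries with indices below n matter (indices 0..n-1).\<close>

type_synonym mat = "nat \<Rightarrow> nat \<Rightarrow> real"

definition symm :: "nat \<Rightarrow> mat \<Rightarrow> bool" where
  "symm n A \<longleftrightarrow> (\<forall>i<n. \<forall>j<n. A i j = A j i)"

definition qform :: "nat \<Rightarrow> mat \<Rightarrow> (nat \<Rightarrow> real) \<Rightarrow> real" where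
  "qform n A x = (\<Sum>i<n. \<Sum>j<n. x i * A i j * x j)"

definition psd :: "nat \<Rightarrow> mat \<Rightarrow> bool" where
  "psd n A \<longleftrightarrow> symm n A \<and> (\<forall>x. qform n A x \<ge> 0)"

definition nonneg :: "nat \<Rightarrow> mat \<Rightarrow> bool" where
  "nonneg n A \<longleftrightarrow> symm n A \<and> (\<forall>i<n. \<forall>j<n. A i j \<ge> 0)"

definition spn :: "nat \<Rightarrow> mat \<Rightarrow> bool" where
  "spn n A \<longleftrightarrow> (\<exists>P N. psd n P \<and> nonneg n N \<and> (\<forall>i<n. \<forall>j<n. A i j = P i j + N i j))"

definition cop :: "nat \<Rightarrow> mat \<Rightarrow> bool" where
  "cop n A \<longleftrightarrow> symm n A \<and> (\<forall>x. (\<forall>i<n. x i \<ge> 0) \<longrightarrow> qform n A x \<ge> 0)"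

text \<open>Lift of an n x n matrix Q = [[M,m],[m^T,mu]] to the (n+1) x (n+1) matrix
  [[M,m,m],[m^T,mu,mu],[m^T,mu,mu]]: the new index n duplicates the last index n-1.\<close>
definition lift :: "nat \<Rightarrow> mat \<Rightarrow> mat" where
  "lift n Q = (\<lambda>i j. Q (min i (n - 1)) (min j (n - 1)))"

end

theory Submission
  imports Defs
begin

definition col :: "nat \<Rightarrow> (nat \<Rightarrow> real) \<Rightarrow> nat \<Rightarrow> real" where
  "col k x = (\<lambda>j. if j = k then x k + x (Suc k) else x j)"

lemma sum_min:
  "(\<Sum>j<Suc (Suc k). f (min j k) * x j) = (\<Sum>j<Suc k. f j * col k x j)"
proof -
  have "(\<Sum>j<k. f (min j k) * x j) = (\<Sum>j<k. f j * col k x j)"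
    by (rule sum.cong) (auto simp: col_def)
  then show ?thesis by (simp add: col_def algebra_simps)
qed

lemma qform_lift:
  "qform (Suc (Suc k)) (lift (Suc k) Q) x = qform (Suc k) Q (col k x)"
proof -
  have "qform (Suc (Suc k)) (lift (Suc k) Q) x
      = (\<Sum>i<Suc (Suc k). (\<Sum>j<Suc (Suc k). Q (min i k) (min j k) * x j) * x i)"
    unfolding qform_def lift_def
    by (simp add: sum_distrib_right sum_distrib_left algebra_simps)
  also have "\<dots> = (\<Sum>i<Suc (Suc k). (\<Sum>j<Suc k. Q (min i k) j * col k x j) * x i)"
    using sum_min[of "Q (min _ k)"] by simp
  also have "\<dots> = (\<Sum>i<Suc k. (\<Sum>j<Suc k. Q i j * col k x j) * col k x i)"
    using sum_min[of "\<lambda>a. \<Sum>j<Suc k. Q a j * col k x j" k x] by simp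
  also have "\<dots> = qform (Suc k) Q (col k x)"
    unfolding qform_def sum_distrib_right
    by (intro sum.cong refl) (simp add: ac_simps)
  finally show ?thesis .
qed

lemma qform_cong:
  assumes "\<forall>i<n. x i = y i" "\<forall>i<n. \<forall>j<n. A i j = B i j"
  shows "qform n A x = qform n B y"
  unfolding qform_def using assms by (auto intro!: sum.cong)

lemma qform_ext: "qform (Suc n) A (x(n:=0)) = qform n A x"
proof -
  have "qform (Suc n) A (x(n:=0)) = qform n A (x(n:=0))"
    unfolding qform_def by simp
  also have "\<dots> = qform n A x" by (rule qform_cong) auto
  finally show ?thesis .
qed

lemma symm_lift: "symm n Q \<Longrightarrow> n \<ge> 1 \<Longrightarrow> symm (n+1) (lift n Q)"
  unfolding symm_def lift_def by auto

lemma psd_lift: "psd (Suc k) P \<Longrightarrow> psd (Suc (Suc k)) (lift (Suc k) P)"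
  using symm_lift[of "Suc k" P] qform_lift[of k P] unfolding psd_def by auto

lemma nonneg_lift: "nonneg (Suc k) P \<Longrightarrow> nonneg (Suc (Suc k)) (lift (Suc k) P)"
  using symm_lift[of "Suc k" P] unfolding nonneg_def lift_def by auto

lemma psd_restr: "psd (Suc n) P \<Longrightarrow> psd n P"
  unfolding psd_def symm_def using qform_ext by (metis less_SucI)

lemma nonneg_restr: "nonneg (Suc n) P \<Longrightarrow> nonneg n P"
  unfolding nonneg_def symm_def by auto

lemma lift_eq: "i < n \<Longrightarrow> j < n \<Longrightarrow> lift n Q i j = Q i j"
  unfolding lift_def by simp

theorem lemma5p5:
  fixes n :: nat and Q :: mat
  assumes "n \<ge> 2" and "symm n Q"
  shows "(spn n Q \<and> \<not> psd n Q \<and> \<not> nonneg n Q \<longrightarrow>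
            spn (n+1) (lift n Q) \<and> \<not> psd (n+1) (lift n Q) \<and> \<not> nonneg (n+1) (lift n Q))
       \<and> (cop n Q \<and> \<not> spn n Q \<longrightarrow>
            cop (n+1) (lift n Q) \<and> \<not> spn (n+1) (lift n Q))"
proof -
  obtain k where nk: "n = Suc k" using assms(1) by (cases n) auto
  have sl: "symm (n+1) (lift n Q)" using symm_lift assms by auto
  have notspn: "\<not> spn (n+1) (lift n Q)" if "\<not> spn n Q"
  proof
    assume "spn (n+1) (lift n Q)"
    then obtain P N where "psd (Suc n) P" "nonneg (Suc n) N"
      "\<forall>i<n+1. \<forall>j<n+1. lift n Q i j = P i j + N i j" unfolding spn_def by auto
    then have "spn n Q" unfolding spn_def using psd_restr nonneg_restr lift_eq
      by (metis less_SucI Suc_eq_plus1)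
    with that show False by simp
  qed
  have part1: "spn (n+1) (lift n Q) \<and> \<not> psd (n+1) (lift n Q) \<and> \<not> nonneg (n+1) (lift n Q)"
    if h: "spn n Q" "\<not> psd n Q" "\<not> nonneg n Q"
  proof (intro conjI)
    obtain P N where PN: "psd n P" "nonneg n N" "\<forall>i<n. \<forall>j<n. Q i j = P i j + N i j"
      using h(1) unfolding spn_def by auto
    show "spn (n+1) (lift n Q)" unfolding spn_def
    proof (intro exI conjI)
      show "psd (n+1) (lift n P)" using psd_lift PN(1) nk by simp
      show "nonneg (n+1) (lift n N)" using nonneg_lift PN(2) nk by simp
      show "\<forall>i<n + 1. \<forall>j<n + 1. lift n Q i j = lift n P i j + lift n N i j"
        using PN(3) nk unfolding lift_def by auto
    qed
    obtain x where x: "qform n Q x < 0" using h(2) assms(2) unfolding psd_def by (meson not_le)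
    show "\<not> psd (n+1) (lift n Q)"
    proof
      assume "psd (n+1) (lift n Q)"
      then have "psd n (lift n Q)" using psd_restr by simp
      then have "qform n (lift n Q) x \<ge> 0" unfolding psd_def by simp
      moreover have "qform n (lift n Q) x = qform n Q x"
        by (rule qform_cong) (auto simp: lift_eq)
      ultimately show False using x by simp
    qed
    obtain i j where ij: "i < n" "j < n" "Q i j < 0"
      using h(3) assms(2) unfolding nonneg_def by force
    show "\<not> nonneg (n+1) (lift n Q)"
    proof
      assume "nonneg (n+1) (lift n Q)"
      then have "0 \<le> lift n Q i j" using ij unfolding nonneg_def by simp
      then show False using ij lift_eq[of i n j Q] by simp
    qed
  qed
  have part2: "cop (n+1) (lift n Q)" if "cop n Q"
    unfolding cop_def
  proof (intro conjI allI impI)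
    show "symm (n+1) (lift n Q)" by (rule sl)
    fix x :: "nat \<Rightarrow> real" assume "\<forall>i<n+1. 0 \<le> x i"
    then have "\<forall>i<n. 0 \<le> col k x i" using nk unfolding col_def by auto
    then have "qform n Q (col k x) \<ge> 0" using that unfolding cop_def by simp
    then show "qform (n+1) (lift n Q) x \<ge> 0" using qform_lift[of k Q x] nk by (simp only: Suc_eq_plus1)
  qed
  show ?thesis
  proof (intro conjI impI)
    assume a: "spn n Q \<and> \<not> psd n Q \<and> \<not> nonneg n Q"
    then show "spn (n+1) (lift n Q)" using part1 by simp
    from a show "\<not> psd (n+1) (lift n Q)" using part1 by simp
    from a show "\<not> nonneg (n+1) (lift n Q)" using part1 by simp
  next
    assume a: "cop n Q \<and> \<not> spn n Q"
    then show "cop (n+1) (lift n Q)" using part2 by simp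
    from a show "\<not> spn (n+1) (lift n Q)" using notspn by simp
  qed
qed

end
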